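(* Let $\mathbb{K}$ be an algebraically closed field of characteristic $p\geq 3$ and $L$ a nilpotent Lie superalgebra over $\mathbb{K}$ of total dimension $3$. Then $L$ is isomorphic to one of the following (basis listed as even $|$ odd, only nonzero brackets listed up to super antisymmetry): $\mathrm{sdim}=(0|3)$: $L^1_{0|3}=\langle\,|e_1,e_2,e_3\rangle$ abelian. $\mathrm{sdim}=(1|2)$, basis $e_1|e_2,e_3$: $L^1_{1|2}$ abelian; $L^2_{1|2}$: $[e_2,e_3]=e_1$; $L^3_{1|2}$: $[e_1,e_2]=e_3$; $L^4_{1|2}$: $[e_3,e_3]=e_1$. $\mathrm{sdim}=(2|1)$, basis $e_1,e_2|e_3$: $L^1_{2|1}$ abelian; $L^2_{2|1}$: $[e_3,e_3]=e_2$. $\mathrm{sdim}=(3|0)$, basis $e_1,e_2,e_3$: $L^1_{3|0}$ abelian; $L^2_{3|0}$: $[e_1,e_2]=e_3$.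
   Context: A Lie superalgebra $L=L_{\bar0}\oplus L_{\bar1}$ over a field of characteristic $p>2$ has a super antisymmetric bracket satisfying the super Jacobi identity and, additionally, $[x,[x,x]]=0$ for all $x\in L_{\bar1}$. $\mathrm{sdim}(L)=(\dim L_{\bar0}|\dim L_{\bar1})$. $L$ is nilpotent if the series $C^0(L)=L$, $C^{k+1}(L)=[C^k(L),L]$ reaches $0$. *)

theory Defs
  imports Main "HOL-Computational_Algebra.Polynomial"
begin

definition alg_closed :: "'a::field itself \<Rightarrow> bool" where
  "alg_closed _ \<longleftrightarrow> (\<forall>q::'a poly. degree q > 0 \<longrightarrow> (\<exists>x. poly q x = 0))"

(* Graded pieces: False = even part, True = odd part. *)
definition gpart :: "'v set \<Rightarrow> 'v set \<Rightarrow> bool \<Rightarrow> 'v set" where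
  "gpart L0 L1 d = (if d then L1 else L0)"

definition ssign :: "bool \<Rightarrow> bool \<Rightarrow> 'a::ring_1" where
  "ssign d e = (if d \<and> e then -1 else 1)"

(* A Lie superalgebra structure on the whole vector space 'v over the field 'a
   (scalar multiplication scale), with grading L = L0 \<oplus> L1 and bracket br. *)
definition lie_superalgebra ::
  "('a::field \<Rightarrow> 'v::ab_group_add \<Rightarrow> 'v) \<Rightarrow> 'v set \<Rightarrow> 'v set \<Rightarrow> ('v \<Rightarrow> 'v \<Rightarrow> 'v) \<Rightarrow> bool" where
  "lie_superalgebra scale L0 L1 br \<longleftrightarrow>
     vector_space scale \<and>
     module.subspace scale L0 \<and> module.subspace scale L1 \<and>
     L0 \<inter> L1 = {0} \<and> (\<forall>v. \<exists>a\<in>L0. \<exists>b\<in>L1. v = a + b) \<and>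
     (\<forall>x y z. br (x + y) z = br x z + br y z) \<and>
     (\<forall>x y z. br x (y + z) = br x y + br x z) \<and>
     (\<forall>c x y. br (scale c x) y = scale c (br x y)) \<and>
     (\<forall>c x y. br x (scale c y) = scale c (br x y)) \<and>
     (\<forall>d e x y. x \<in> gpart L0 L1 d \<longrightarrow> y \<in> gpart L0 L1 e \<longrightarrow>
        br x y \<in> gpart L0 L1 (d \<noteq> e)) \<and>
     (\<forall>d e x y. x \<in> gpart L0 L1 d \<longrightarrow> y \<in> gpart L0 L1 e \<longrightarrow>
        br x y = - scale (ssign d e) (br y x)) \<and>
     (\<forall>d e x y z. x \<in> gpart L0 L1 d \<longrightarrow> y \<in> gpart L0 L1 e \<longrightarrow>
        br x (br y z) = br (br x y) z + scale (ssign d e) (br y (br x z))) \<and>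
     (\<forall>x\<in>L1. br x (br x x) = 0)"

fun lcs :: "('a::field \<Rightarrow> 'v::ab_group_add \<Rightarrow> 'v) \<Rightarrow> ('v \<Rightarrow> 'v \<Rightarrow> 'v) \<Rightarrow> nat \<Rightarrow> 'v set" where
  "lcs scale br 0 = UNIV"
| "lcs scale br (Suc k) = module.span scale {br x y | x y. x \<in> lcs scale br k}"

definition nilpotent_lsa :: "('a::field \<Rightarrow> 'v::ab_group_add \<Rightarrow> 'v) \<Rightarrow> ('v \<Rightarrow> 'v \<Rightarrow> 'v) \<Rightarrow> bool" where
  "nilpotent_lsa scale br \<longleftrightarrow> (\<exists>k. lcs scale br k = {0})"

definition total_dim :: "('a::field \<Rightarrow> 'v::ab_group_add \<Rightarrow> 'v) \<Rightarrow> nat \<Rightarrow> bool" where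
  "total_dim scale n \<longleftrightarrow> (\<exists>B. finite B \<and> card B = n \<and> module.independent scale B \<and>
                                module.span scale B = UNIV)"

(* L is isomorphic to the model Lie superalgebra with homogeneous basis e_1,e_2,e_3,
   e_i of parity par i (True = odd), and structure constants c: [e_i,e_j] = sum_k c i j k e_k
   for i <= j (the remaining brackets are determined by super antisymmetry).
   Such an isomorphism is the same thing as a homogeneous basis of L with this
   multiplication table. *)
definition iso_model ::
  "('a::field \<Rightarrow> 'v::ab_group_add \<Rightarrow> 'v) \<Rightarrow> 'v set \<Rightarrow> 'v set \<Rightarrow> ('v \<Rightarrow> 'v \<Rightarrow> 'v) \<Rightarrow>
   (nat \<Rightarrow> bool) \<Rightarrow> (nat \<Rightarrow> nat \<Rightarrow> nat \<Rightarrow> 'a) \<Rightarrow> bool" where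
  "iso_model scale L0 L1 br par c \<longleftrightarrow>
     (\<exists>e :: nat \<Rightarrow> 'v.
        inj_on e {1,2,3} \<and> module.independent scale (e ` {1,2,3}) \<and>
        module.span scale (e ` {1,2,3}) = UNIV \<and>
        (\<forall>i\<in>{1,2,3}. e i \<in> gpart L0 L1 (par i)) \<and>
        (\<forall>i\<in>{1,2,3}. \<forall>j\<in>{1,2,3}. i \<le> j \<longrightarrow>
            br (e i) (e j) = (\<Sum>k\<in>{1,2,3}. scale (c i j k) (e k))))"

definition par03 :: "nat \<Rightarrow> bool" where "par03 i = True"
definition par12 :: "nat \<Rightarrow> bool" where "par12 i = (i \<noteq> 1)"
definition par21 :: "nat \<Rightarrow> bool" where "par21 i = (i = 3)"
definition par30 :: "nat \<Rightarrow> bool" where "par30 i = False"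

definition c_abelian :: "nat \<Rightarrow> nat \<Rightarrow> nat \<Rightarrow> 'a::field" where
  "c_abelian i j k = 0"
(* single nonzero bracket [e_a, e_b] = e_r (a <= b) *)
definition c_one :: "nat \<Rightarrow> nat \<Rightarrow> nat \<Rightarrow> nat \<Rightarrow> nat \<Rightarrow> nat \<Rightarrow> 'a::field" where
  "c_one a b r i j k = (if i = a \<and> j = b \<and> k = r then 1 else 0)"

end

theory Submission
  imports Defs
begin

locale L3 = finite_dimensional_vector_space scale Basis
  for scale :: "'a::field \<Rightarrow> 'v::ab_group_add \<Rightarrow> 'v" (infixr "*s" 75) and Basis +
  fixes L0 L1 :: "'v set" and br :: "'v \<Rightarrow> 'v \<Rightarrow> 'v" and k0 :: nat
  assumes sub0: "subspace L0" and sub1: "subspace L1" and int01: "L0 \<inter> L1 = {0}"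
    and dec: "\<forall>v. \<exists>a\<in>L0. \<exists>b\<in>L1. v = a + b"
    and addL: "br (x + y) z = br x z + br y z"
    and addR: "br x (y + z) = br x y + br x z"
    and scL: "br (c *s x) y = c *s (br x y)"
    and scR: "br x (c *s y) = c *s (br x y)"
    and grad: "\<forall>d e x y. x \<in> gpart L0 L1 d \<longrightarrow> y \<in> gpart L0 L1 e \<longrightarrow>
        br x y \<in> gpart L0 L1 (d \<noteq> e)"
    and anti: "\<forall>d e x y. x \<in> gpart L0 L1 d \<longrightarrow> y \<in> gpart L0 L1 e \<longrightarrow>
        br x y = - scale (ssign d e) (br y x)"
    and odd3: "\<forall>x\<in>L1. br x (br x x) = 0"
    and nil: "lcs scale br k0 = {0}"
    and card3: "card Basis = 3"
    and two: "(2::'a) \<noteq> 0"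
    and ac: "alg_closed TYPE('a)"
begin

lemma dimU: "dim UNIV = 3" using card3 by simp

lemma br0L[simp]: "br 0 y = 0" using addL[of 0 0 y] by simp
lemma br0R[simp]: "br x 0 = 0" using addR[of x 0 0] by simp
lemma brnegL[simp]: "br (- x) y = - br x y"
  using addL[of x "-x" y] by (simp, metis add.commute eq_neg_iff_add_eq_0)
lemma brnegR[simp]: "br x (- y) = - br x y"
  using addR[of x y "-y"] by (simp, metis add.commute eq_neg_iff_add_eq_0)
lemma brdiffL[simp]: "br (x - y) z = br x z - br y z"
  using addL[of x "-y" z] by simp
lemma brdiffR[simp]: "br x (y - z) = br x y - br x z"
  using addR[of x y "-z"] by simp
lemmas brsimps[simp] = addL addR scL scR

lemma E00: "x \<in> L0 \<Longrightarrow> y \<in> L0 \<Longrightarrow> br x y \<in> L0"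
  using grad[rule_format, of x False y False] by (simp add: gpart_def)
lemma E01: "x \<in> L0 \<Longrightarrow> y \<in> L1 \<Longrightarrow> br x y \<in> L1"
  using grad[rule_format, of x False y True] by (simp add: gpart_def)
lemma E10: "x \<in> L1 \<Longrightarrow> y \<in> L0 \<Longrightarrow> br x y \<in> L1"
  using grad[rule_format, of x True y False] by (simp add: gpart_def)
lemma E11: "x \<in> L1 \<Longrightarrow> y \<in> L1 \<Longrightarrow> br x y \<in> L0"
  using grad[rule_format, of x True y True] by (simp add: gpart_def)
lemma A00: "x \<in> L0 \<Longrightarrow> y \<in> L0 \<Longrightarrow> br y x = - br x y"
  using anti[rule_format, of y False x False] by (simp add: gpart_def ssign_def)
lemma A01: "x \<in> L0 \<Longrightarrow> y \<in> L1 \<Longrightarrow> br y x = - br x y"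
  using anti[rule_format, of y True x False] by (simp add: gpart_def ssign_def)
lemma A11: "x \<in> L1 \<Longrightarrow> y \<in> L1 \<Longrightarrow> br y x = br x y"
  using anti[rule_format, of y True x True] by (simp add: gpart_def ssign_def)

lemma two_scale: "(2::'a) *s v = v + v"
  by (metis one_add_one scale_left_distrib scale_one)

lemma self0: "x \<in> L0 \<Longrightarrow> br x x = 0"
proof -
  assume "x \<in> L0"
  hence "br x x = - br x x" using A00 by blast
  hence "(2::'a) *s br x x = 0" by (simp add: two_scale eq_neg_iff_add_eq_0)
  thus ?thesis using two by simp
qed

lemma hom_cases: "x \<in> L0 \<or> x \<in> L1 \<Longrightarrow> y \<in> L0 \<Longrightarrow> br y x = - br x y"
  using A00 A01 by (metis minus_minus)

lemma lcs_absorb: assumes "v = c *s br v y" shows "v = 0"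
proof -
  have "v \<in> lcs scale br k" for k
  proof (induction k)
    case 0 then show ?case by simp
  next
    case (Suc k)
    have "br v y \<in> {br x y | x y. x \<in> lcs scale br k}" using Suc by blast
    hence "br v y \<in> lcs scale br (Suc k)" by (simp add: span_base)
    hence "c *s br v y \<in> lcs scale br (Suc k)" by (simp add: span_scale)
    then show ?case using assms by simp
  qed
  thus ?thesis using nil by blast
qed

lemma absorb: assumes "x \<in> L0" "v \<in> L0 \<or> v \<in> L1" "br x v = c *s v" "c \<noteq> 0"
  shows "v = 0"
proof -
  have "br x v = - br v x" using hom_cases[OF assms(2,1)] .
  hence "br v x = - br x v" by simp
  hence "(- inverse c) *s br v x = inverse c *s br x v" by simp
  also have "\<dots> = v" using assms by simp
  finally have "v = (- inverse c) *s br v x" by simp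
  thus ?thesis by (rule lcs_absorb)
qed


lemma lin3a: assumes sp: "span {x1,x2,x3} = UNIV" and eq: "\<alpha> *s x1 + \<beta> *s x2 + \<gamma> *s x3 = 0"
  shows "\<gamma> = 0"
proof (rule ccontr)
  assume g: "\<gamma> \<noteq> 0"
  have "x3 = (- \<alpha> / \<gamma>) *s x1 + (- \<beta> / \<gamma>) *s x2"
  proof -
    have "\<gamma> *s x3 = - (\<alpha> *s x1) - \<beta> *s x2" using eq
      by (metis add.commute add_diff_cancel_left' diff_0 diff_diff_eq)
    hence "inverse \<gamma> *s (\<gamma> *s x3) = inverse \<gamma> *s (- (\<alpha> *s x1) - \<beta> *s x2)" by simp
    thus ?thesis using g by (simp add: scale_right_diff_distrib divide_inverse mult.commute)
  qed
  hence "x3 \<in> span {x1,x2}"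
    by (simp add: span_diff span_neg span_scale span_base)
  hence "span {x1,x2} = UNIV" using sp span_redundant[of x3 "{x1,x2}"]
    by (simp add: insert_commute)
  hence "dim (UNIV::'v set) \<le> card {x1,x2}" using dim_le_card[of UNIV "{x1,x2}"] by simp
  also have "\<dots> \<le> 2" by (simp add: card_insert_le_m1)
  finally show False using dimU by simp
qed

lemma lin3: assumes sp: "span {x1,x2,x3} = UNIV" and eq: "\<alpha> *s x1 + \<beta> *s x2 + \<gamma> *s x3 = 0"
  shows "\<alpha> = 0 \<and> \<beta> = 0 \<and> \<gamma> = 0"
proof -
  have g: "\<gamma> = 0" by (rule lin3a[OF sp eq])
  have "span {x1,x3,x2} = UNIV" using sp by (simp add: insert_commute)
  moreover have "\<alpha> *s x1 + \<gamma> *s x3 + \<beta> *s x2 = 0" using eq by (simp add: algebra_simps)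
  ultimately have b: "\<beta> = 0" by (rule lin3a)
  have "span {x2,x3,x1} = UNIV" using sp by (simp add: insert_commute)
  moreover have "\<beta> *s x2 + \<gamma> *s x3 + \<alpha> *s x1 = 0" using eq by (simp add: algebra_simps)
  ultimately have a: "\<alpha> = 0" by (rule lin3a)
  show ?thesis using a b g by simp
qed

lemma basis3: assumes sp: "span {x1,x2,x3} = UNIV"
  shows "x1 \<noteq> x2 \<and> x1 \<noteq> x3 \<and> x2 \<noteq> x3 \<and> independent {x1,x2,x3}"
proof -
  have "card {x1,x2,x3} \<ge> 3"
    using dim_le_card[of UNIV "{x1,x2,x3}"] sp dimU by simp
  hence d: "x1 \<noteq> x2 \<and> x1 \<noteq> x3 \<and> x2 \<noteq> x3"
    by (cases "x1 = x2"; cases "x1 = x3"; cases "x2 = x3"; simp add: card_insert_if)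
  have "independent {x1,x2,x3}"
    by (rule card_le_dim_spanning[of _ UNIV]) (use sp dimU d in auto)
  with d show ?thesis by simp
qed

definition tri :: "'v \<Rightarrow> 'v \<Rightarrow> 'v \<Rightarrow> nat \<Rightarrow> 'v" where
  "tri x1 x2 x3 i = (if i = 1 then x1 else if i = 2 then x2 else x3)"

lemma iso_intro:
  assumes sp: "span {x1,x2,x3} = UNIV"
    and p1: "x1 \<in> gpart L0 L1 (par 1)" and p2: "x2 \<in> gpart L0 L1 (par 2)"
    and p3: "x3 \<in> gpart L0 L1 (par 3)"
    and b11: "br x1 x1 = c 1 1 1 *s x1 + c 1 1 2 *s x2 + c 1 1 3 *s x3"
    and b12: "br x1 x2 = c 1 2 1 *s x1 + c 1 2 2 *s x2 + c 1 2 3 *s x3"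
    and b13: "br x1 x3 = c 1 3 1 *s x1 + c 1 3 2 *s x2 + c 1 3 3 *s x3"
    and b22: "br x2 x2 = c 2 2 1 *s x1 + c 2 2 2 *s x2 + c 2 2 3 *s x3"
    and b23: "br x2 x3 = c 2 3 1 *s x1 + c 2 3 2 *s x2 + c 2 3 3 *s x3"
    and b33: "br x3 x3 = c 3 3 1 *s x1 + c 3 3 2 *s x2 + c 3 3 3 *s x3"
  shows "iso_model scale L0 L1 br par c"
proof -
  have B: "x1 \<noteq> x2 \<and> x1 \<noteq> x3 \<and> x2 \<noteq> x3 \<and> independent {x1,x2,x3}" by (rule basis3[OF sp])
  have im: "tri x1 x2 x3 ` {1,2,3} = {x1,x2,x3}" by (auto simp: tri_def)
  have inj: "inj_on (tri x1 x2 x3) {1,2,3}" using B by (auto simp: inj_on_def tri_def)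
  have sm: "(\<Sum>k\<in>{1,2,3}. c i j k *s tri x1 x2 x3 k) = c i j 1 *s x1 + c i j 2 *s x2 + c i j 3 *s x3"
    for i j by (simp add: tri_def)
  have t1: "tri x1 x2 x3 1 = x1" and t2: "tri x1 x2 x3 2 = x2" and t3: "tri x1 x2 x3 3 = x3"
    by (simp_all add: tri_def)
  have P: "\<forall>i\<in>{1,2,3}. tri x1 x2 x3 i \<in> gpart L0 L1 (par i)"
    using p1 p2 p3 t1 t2 t3 by auto
  have Q: "\<forall>i\<in>{1,2,3::nat}. \<forall>j\<in>{1,2,3}. i \<le> j \<longrightarrow>
            br (tri x1 x2 x3 i) (tri x1 x2 x3 j) = c i j 1 *s x1 + c i j 2 *s x2 + c i j 3 *s x3"
  proof (intro ballI impI)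
    fix i j :: nat assume "i \<in> {1,2,3}" "j \<in> {1,2,3}" "i \<le> j"
    hence "(i = 1 \<and> j = 1) \<or> (i = 1 \<and> j = 2) \<or> (i = 1 \<and> j = 3) \<or> (i = 2 \<and> j = 2) \<or>
       (i = 2 \<and> j = 3) \<or> (i = 3 \<and> j = 3)" by auto
    thus "br (tri x1 x2 x3 i) (tri x1 x2 x3 j) = c i j 1 *s x1 + c i j 2 *s x2 + c i j 3 *s x3"
      using b11 b12 b13 b22 b23 b33 t1 t2 t3 by (elim disjE conjE) simp_all
  qed
  show ?thesis unfolding iso_model_def
    apply (rule exI[of _ "tri x1 x2 x3"])
    apply (simp only: im inj sm B sp simp_thms)
    by (rule conjI[OF P Q])
qed

lemma indep_union: assumes "finite B1" "B1 \<subseteq> L1" "independent B1" "B0 \<subseteq> L0" "independent B0"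
  shows "independent (B0 \<union> B1)"
  using assms
proof (induction B1 rule: finite_induct)
  case empty then show ?case by simp
next
  case (insert b F)
  have iF: "independent F" using insert.prems(2) independent_mono by blast
  have bF: "b \<notin> span F" using insert.prems(2) insert.hyps(2) by (simp add: independent_insert)
  have IH: "independent (B0 \<union> F)" using insert.IH insert.prems(1,3,4) iF by simp
  have "b \<notin> span (B0 \<union> F)"
  proof
    assume "b \<in> span (B0 \<union> F)"
    then obtain x y where xy: "b = x + y" "x \<in> span B0" "y \<in> span F" by (auto simp: span_Un)
    have "span B0 \<subseteq> L0" using insert.prems(3) sub0 span_minimal by blast
    hence x0: "x \<in> L0" using xy by blast
    have "span F \<subseteq> L1" using insert.prems(1) sub1 span_minimal by blast
    hence "y \<in> L1" using xy by blast
    moreover have "b \<in> L1" using insert.prems(1) by blast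
    ultimately have "b - y \<in> L1" using sub1 subspace_diff by blast
    moreover have "b - y = x" using xy by simp
    ultimately have "x = 0" using x0 int01 by blast
    thus False using xy bF by simp
  qed
  thus ?case using IH by (simp add: independent_insert)
qed

lemma hom_basis: obtains B0 B1 where "finite B0" "finite B1" "B0 \<subseteq> L0" "B1 \<subseteq> L1"
  "span B0 = L0" "span B1 = L1" "span (B0 \<union> B1) = UNIV" "card B0 + card B1 = 3"
proof -
  obtain B0 where B0: "B0 \<subseteq> L0" "independent B0" "L0 \<subseteq> span B0" using basis_exists by metis
  obtain B1 where B1: "B1 \<subseteq> L1" "independent B1" "L1 \<subseteq> span B1" using basis_exists by metis
  have f0: "finite B0" using B0(2) finiteI_independent by simp
  have f1: "finite B1" using B1(2) finiteI_independent by simp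
  have s0: "span B0 = L0" using span_subspace[OF B0(1) B0(3) sub0] .
  have s1: "span B1 = L1" using span_subspace[OF B1(1) B1(3) sub1] .
  have sU: "span (B0 \<union> B1) = UNIV"
  proof -
    { fix v obtain a b where ab: "a \<in> L0" "b \<in> L1" "v = a + b" using dec by metis
      have "a \<in> span (B0 \<union> B1)" using ab(1) s0 span_mono[of B0 "B0 \<union> B1"] by auto
      moreover have "b \<in> span (B0 \<union> B1)" using ab(2) s1 span_mono[of B1 "B0 \<union> B1"] by auto
      ultimately have "v \<in> span (B0 \<union> B1)" using ab(3) span_add by simp }
    thus ?thesis by auto
  qed
  have iU: "independent (B0 \<union> B1)" using indep_union[OF f1 B1(1,2) B0(1,2)] .
  have "card (B0 \<union> B1) = 3" using basis_card_eq_dim[of "B0 \<union> B1" UNIV] iU sU dimU by simp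
  moreover have "B0 \<inter> B1 = {}"
  proof -
    { fix x assume x: "x \<in> B0" "x \<in> B1"
      hence "x \<in> L0 \<inter> L1" using B0(1) B1(1) by auto
      hence "x = 0" using int01 by simp
      hence False using x(1) B0(2) dependent_zero by metis }
    thus ?thesis by auto
  qed
  ultimately have "card B0 + card B1 = 3" using f0 f1 by (simp add: card_Un_disjoint)
  thus ?thesis using that f0 f1 B0(1) B1(1) s0 s1 sU by metis
qed


lemma cen_swap: assumes "z \<in> L0 \<or> z \<in> L1" "x \<in> L0 \<or> x \<in> L1" "br z x = 0"
  shows "br x z = 0"
proof -
  have "\<exists>d. x \<in> gpart L0 L1 d" using assms(2) by (metis gpart_def)
  moreover have "\<exists>e. z \<in> gpart L0 L1 e" using assms(1) by (metis gpart_def)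
  ultimately obtain d e where "x \<in> gpart L0 L1 d" "z \<in> gpart L0 L1 e" by blast
  hence "br x z = - scale (ssign d e) (br z x)" using anti by blast
  thus ?thesis using assms(3) by simp
qed

lemma sum01: assumes "u \<in> L0" "w \<in> L1" "u + w = 0" shows "u = 0 \<and> w = 0"
proof -
  have "u = - w" using assms(3) by (simp add: eq_neg_iff_add_eq_0)
  hence "u \<in> L1" using assms(2) sub1 subspace_neg by metis
  hence "u = 0" using assms(1) int01 by auto
  thus ?thesis using assms(3) by simp
qed

lemma central_exists: obtains z where "z \<noteq> 0" "z \<in> L0 \<or> z \<in> L1" "\<And>y. br z y = 0"
proof -
  have "\<exists>z. z \<noteq> 0 \<and> (\<forall>y. br z y = 0)"
  proof (rule ccontr)
    assume H: "\<not> (\<exists>z. z \<noteq> 0 \<and> (\<forall>y. br z y = 0))"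
    have "\<exists>v\<in>lcs scale br k. v \<noteq> 0" for k
    proof (induction k)
      case 0
      have "Basis \<noteq> {}" using card3 by auto
      then obtain b where "b \<in> Basis" by auto
      moreover have "0 \<notin> Basis" using independent_Basis dependent_zero by metis
      ultimately show ?case by (metis UNIV_I lcs.simps(1))
    next
      case (Suc k)
      then obtain v where v: "v \<in> lcs scale br k" "v \<noteq> 0" by blast
      then obtain y where y: "br v y \<noteq> 0" using H by blast
      have "br v y \<in> lcs scale br (Suc k)" using v(1) by (auto intro: span_base)
      thus ?case using y by blast
    qed
    thus False using nil by (metis singletonD)
  qed
  then obtain z where z: "z \<noteq> 0" "\<And>y. br z y = 0" by blast
  obtain a b where ab: "a \<in> L0" "b \<in> L1" "z = a + b" using dec by metis
  have ca: "br a y = 0 \<and> br b y = 0" for y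
  proof -
    obtain y0 y1 where y: "y0 \<in> L0" "y1 \<in> L1" "y = y0 + y1" using dec by metis
    have "br a y0 + br b y0 = 0" using z(2)[of y0] ab(3) by simp
    hence 1: "br a y0 = 0 \<and> br b y0 = 0" using sum01 E00[OF ab(1) y(1)] E10[OF ab(2) y(1)] by metis
    have "br b y1 + br a y1 = 0" using z(2)[of y1] ab(3) by (simp add: add.commute)
    hence 2: "br b y1 = 0 \<and> br a y1 = 0" using sum01 E11[OF ab(2) y(2)] E01[OF ab(1) y(2)] by metis
    show ?thesis using 1 2 y(3) by simp
  qed
  show ?thesis
  proof (cases "a = 0")
    case True
    hence "b \<noteq> 0" using z(1) ab(3) by simp
    thus ?thesis using that ab(2) ca by metis
  next
    case False
    thus ?thesis using that ab(1) ca by metis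
  qed
qed

lemma span1E: assumes "x \<in> span {p}" obtains \<alpha> where "x = \<alpha> *s p"
  using assms by (auto simp: span_singleton)

lemma span2E: assumes "x \<in> span {p,q}" obtains \<alpha> \<beta> where "x = \<alpha> *s p + \<beta> *s q"
proof -
  obtain k where "x - k *s p \<in> span {q}" using assms span_breakdown_eq by blast
  then obtain m where "x - k *s p = m *s q" by (auto simp: span_singleton)
  hence "x = k *s p + m *s q" by (simp add: algebra_simps)
  thus ?thesis using that by blast
qed

lemma span3E: assumes "x \<in> span {p,q,r}" obtains \<alpha> \<beta> \<gamma> where "x = \<alpha> *s p + \<beta> *s q + \<gamma> *s r"
proof -
  obtain k where "x - k *s p \<in> span {q,r}" using assms span_breakdown_eq by blast
  then obtain m n where "x - k *s p = m *s q + n *s r" by (rule span2E)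
  hence "x = k *s p + m *s q + n *s r" by (simp add: algebra_simps)
  thus ?thesis using that by blast
qed

lemma span_UNIV_from: assumes "p \<in> span S" "q \<in> span S" "r \<in> span S" "span {p,q,r} = UNIV"
  shows "span S = UNIV"
proof -
  have "{p,q,r} \<subseteq> span S" using assms by auto
  hence "span {p,q,r} \<subseteq> span S" using span_minimal subspace_span by blast
  thus ?thesis using assms(4) by auto
qed

lemma exch1: assumes "z \<in> span {c}" "z \<noteq> 0" shows "c \<in> span {z}"
  using in_span_insert[of z c "{}"] assms by simp

lemma exch2: assumes "z \<in> span {b,c}" "z \<noteq> 0" shows "b \<in> span {z,c} \<or> c \<in> span {z,b}"
proof (cases "z \<in> span {c}")
  case True
  hence "c \<in> span {z}" using exch1 assms(2) by blast
  hence "c \<in> span {z,b}" using span_mono[of "{z}" "{z,b}"] by blast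
  thus ?thesis by blast
next
  case False
  hence "b \<in> span (insert z {c})" using in_span_insert[of z b "{c}"] assms(1) by simp
  thus ?thesis by simp
qed

lemma exch3: assumes "span {b1,b2,b3} = UNIV" "z \<noteq> 0"
  shows "\<exists>a b. (a = b1 \<or> a = b2 \<or> a = b3) \<and> (b = b1 \<or> b = b2 \<or> b = b3) \<and> span {z,a,b} = UNIV"
proof (cases "z \<in> span {b2,b3}")
  case True
  then consider "b2 \<in> span {z,b3}" | "b3 \<in> span {z,b2}" using exch2 assms(2) by blast
  thus ?thesis
  proof cases
    case 1
    have "b1 \<in> span {z,b1,b3}" "b2 \<in> span {z,b1,b3}" "b3 \<in> span {z,b1,b3}"
      using 1 span_mono[of "{z,b3}" "{z,b1,b3}"] by (auto intro: span_base)
    hence "span {z,b1,b3} = UNIV" using span_UNIV_from[OF _ _ _ assms(1)] by simp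
    thus ?thesis by blast
  next
    case 2
    have "b1 \<in> span {z,b1,b2}" "b2 \<in> span {z,b1,b2}" "b3 \<in> span {z,b1,b2}"
      using 2 span_mono[of "{z,b2}" "{z,b1,b2}"] by (auto intro: span_base)
    hence "span {z,b1,b2} = UNIV" using span_UNIV_from[OF _ _ _ assms(1)] by simp
    thus ?thesis by blast
  qed
next
  case False
  have "z \<in> span (insert b1 {b2,b3})" using assms(1) by simp
  hence "b1 \<in> span {z,b2,b3}" using in_span_insert[of z b1 "{b2,b3}"] False by simp
  moreover have "b2 \<in> span {z,b2,b3}" "b3 \<in> span {z,b2,b3}" by (auto intro: span_base)
  ultimately have "span {z,b2,b3} = UNIV" using span_UNIV_from[OF _ _ _ assms(1)] by simp
  thus ?thesis by blast
qed


lemma case03: assumes "L0 = {0}" "x1 \<in> L1" "x2 \<in> L1" "x3 \<in> L1" "span {x1,x2,x3} = UNIV"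
  shows "iso_model scale L0 L1 br par03 c_abelian"
proof -
  have z: "br x y = 0" if "x \<in> L1" "y \<in> L1" for x y using E11[OF that] assms(1) by simp
  show ?thesis
    by (rule iso_intro[OF assms(5)]) (simp_all add: gpart_def par03_def c_abelian_def z assms(2-4))
qed

lemma case30: assumes "L1 = {0}" "span {b1,b2,b3} = UNIV"
  shows "iso_model scale L0 L1 br par30 c_abelian \<or> iso_model scale L0 L1 br par30 (c_one 1 2 3)"
proof -
  have all0: "v \<in> L0" for v
  proof -
    obtain a b where "a \<in> L0" "b \<in> L1" "v = a + b" using dec by metis
    thus ?thesis using assms(1) by simp
  qed
  obtain z where z: "z \<noteq> 0" "\<And>y. br z y = 0" using central_exists by metis
  have zr: "br y z = 0" for y using cen_swap[of z y] z(2) all0 by simp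
  obtain a b where ab: "span {z,a,b} = UNIV" using exch3[OF assms(2) z(1)] by blast
  define w where "w = br a b"
  show ?thesis
  proof (cases "w = 0")
    case True
    have "iso_model scale L0 L1 br par30 c_abelian"
      by (rule iso_intro[OF ab]) (simp_all add: gpart_def par30_def c_abelian_def all0 z zr self0
          True[unfolded w_def])
    thus ?thesis by simp
  next
    case False
    obtain \<gamma> \<alpha> \<beta> where wr: "w = \<gamma> *s z + \<alpha> *s a + \<beta> *s b" using span3E ab by blast
    have aa: "br a a = 0" and bb: "br b b = 0" using self0 all0 by auto
    have ba: "br b a = - w" unfolding w_def using A00 all0 by metis
    have "br a w = br a (\<gamma> *s z + \<alpha> *s a + \<beta> *s b)" using wr by simp
    also have "\<dots> = \<beta> *s w" by (simp add: zr aa w_def)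
    finally have "br a w = \<beta> *s w" .
    hence b0: "\<beta> = 0" using absorb[of a w \<beta>] all0 False by auto
    have "br b w = br b (\<gamma> *s z + \<alpha> *s a + \<beta> *s b)" using wr by simp
    also have "\<dots> = (- \<alpha>) *s w" by (simp add: zr bb ba)
    finally have "br b w = (- \<alpha>) *s w" .
    hence a0: "\<alpha> = 0" using absorb[of b w "- \<alpha>"] all0 False by auto
    have wg: "w = \<gamma> *s z" using wr a0 b0 by simp
    hence g0: "\<gamma> \<noteq> 0" using False by auto
    have "z = inverse \<gamma> *s w" using wg g0 by simp
    hence "z \<in> span {a,b,w}" by (simp add: span_scale span_base)
    hence sp: "span {a,b,w} = UNIV"
      using span_UNIV_from[OF _ _ _ ab] by (simp add: span_base)
    have "iso_model scale L0 L1 br par30 (c_one 1 2 3)"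
      by (rule iso_intro[OF sp]) (simp_all add: gpart_def par30_def c_one_def all0 z zr self0
          wg w_def[symmetric])
    thus ?thesis by simp
  qed
qed


lemma case21: assumes L0s: "L0 = span {a,b}" and L1s: "L1 = span {c}" and sp: "span {a,b,c} = UNIV"
  shows "iso_model scale L0 L1 br par21 c_abelian \<or> iso_model scale L0 L1 br par21 (c_one 3 3 2)"
proof -
  have a0: "a \<in> L0" and b0: "b \<in> L0" and c1: "c \<in> L1" using L0s L1s by (auto intro: span_base)
  have cnz: "c \<noteq> 0"
  proof
    assume "c = 0"
    hence "0 *s a + 0 *s b + 1 *s c = 0" by simp
    from lin3[OF sp this] show False by simp
  qed
  have aa: "br a a = 0" and bb: "br b b = 0" using self0 a0 b0 by auto
  define w where "w = br a b"
  have ba: "br b a = - w" unfolding w_def using A00 a0 b0 by metis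
  have w0: "w = 0"
  proof (rule ccontr)
    assume wn: "w \<noteq> 0"
    have wL: "w \<in> L0" unfolding w_def using E00 a0 b0 by blast
    then obtain \<alpha> \<beta> where wr: "w = \<alpha> *s a + \<beta> *s b" using L0s span2E by blast
    have "br a w = br a (\<alpha> *s a + \<beta> *s b)" using wr by simp
    also have "\<dots> = \<beta> *s w" by (simp add: aa w_def)
    finally have "br a w = \<beta> *s w" .
    hence be: "\<beta> = 0" using absorb[of a w \<beta>] a0 wL wn by auto
    have "br b w = br b (\<alpha> *s a + \<beta> *s b)" using wr by simp
    also have "\<dots> = (- \<alpha>) *s w" by (simp add: bb ba)
    finally have "br b w = (- \<alpha>) *s w" .
    hence al: "\<alpha> = 0" using absorb[of b w "- \<alpha>"] b0 wL wn by auto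
    show False using wr al be wn by simp
  qed
  have ab: "br a b = 0" and ba0: "br b a = 0" using w0 ba w_def by auto
  have ac: "br a c = 0"
  proof -
    obtain lam where "br a c = lam *s c" using E01[OF a0 c1] L1s span1E by blast
    thus ?thesis using absorb[of a c lam] a0 c1 cnz by auto
  qed
  have bc: "br b c = 0"
  proof -
    obtain lam where "br b c = lam *s c" using E01[OF b0 c1] L1s span1E by blast
    thus ?thesis using absorb[of b c lam] b0 c1 cnz by auto
  qed
  define u where "u = br c c"
  have u0: "u \<in> L0" unfolding u_def using E11 c1 by blast
  show ?thesis
  proof (cases "u = 0")
    case True
    have "iso_model scale L0 L1 br par21 c_abelian"
      by (rule iso_intro[OF sp]) (simp_all add: gpart_def par21_def c_abelian_def a0 b0 c1 aa bb ab ac bc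
          True[unfolded u_def])
    thus ?thesis by simp
  next
    case False
    obtain \<mu> \<nu> where ur: "u = \<mu> *s a + \<nu> *s b" using u0 L0s span2E by blast
    have au: "br a u = 0" unfolding ur by (simp add: aa ab)
    have bu: "br b u = 0" unfolding ur by (simp add: bb ba0)
    have uu: "br u u = 0" using self0 u0 by blast
    have cu: "br c u = 0" unfolding u_def using odd3 c1 by blast
    have uc: "br u c = 0" using A01[OF u0 c1] cu by simp
    have main: "iso_model scale L0 L1 br par21 (c_one 3 3 2)"
      if d: "d = a \<or> d = b" and spd: "span {d,u,c} = UNIV" for d
    proof -
      have d0: "d \<in> L0" and dd: "br d d = 0" and du: "br d u = 0" and dc: "br d c = 0"
        using d a0 b0 aa bb au bu ac bc by auto
      show ?thesis
        by (rule iso_intro[OF spd]) (simp_all add: gpart_def par21_def c_one_def d0 u0 c1 dd du dc uu uc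
          u_def[symmetric])
    qed
    have "u \<in> span {a,b}" using u0 L0s by simp
    then consider "a \<in> span {u,b}" | "b \<in> span {u,a}" using exch2 False by blast
    thus ?thesis
    proof cases
      case 1
      have "a \<in> span {b,u,c}" "b \<in> span {b,u,c}" "c \<in> span {b,u,c}"
        using 1 span_mono[of "{u,b}" "{b,u,c}"] by (auto intro: span_base)
      hence "span {b,u,c} = UNIV" using span_UNIV_from[OF _ _ _ sp] by simp
      thus ?thesis using main by blast
    next
      case 2
      have "a \<in> span {a,u,c}" "b \<in> span {a,u,c}" "c \<in> span {a,u,c}"
        using 2 span_mono[of "{u,a}" "{a,u,c}"] by (auto intro: span_base)
      hence "span {a,u,c} = UNIV" using span_UNIV_from[OF _ _ _ sp] by simp
      thus ?thesis using main by blast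
    qed
  qed
qed


lemma hyp: assumes u1: "u \<in> L1" and y1: "y \<in> L1" and uu: "br u u = 0" and uy: "br u y = k *s a"
  and yy: "br y y = t *s a" and k: "k \<noteq> 0"
  defines "w \<equiv> inverse k *s (y - (t / (2*k)) *s u)"
  shows "br u w = a" "br w w = 0" "y = k *s w + (t / (2*k)) *s u" "w \<in> L1"
proof -
  have yu: "br y u = k *s a" using A11[OF u1 y1] uy by simp
  show "br u w = a" unfolding w_def using k by (simp add: uy uu)
  have "br w w = (inverse k * inverse k) *s (t *s a - (t/(2*k)) *s (k *s a) - (t/(2*k)) *s (k *s a))"
    unfolding w_def by (simp add: uu uy yu yy algebra_simps)
  also have "(t/(2*k)) *s (k *s a) = (t/2) *s a" using k by simp
  also have "t *s a - (t/2) *s a - (t/2) *s a = (t - t/2 - t/2) *s a" by (simp only: scale_left_diff_distrib)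
  also have "t - t/2 - t/2 = 0" using two by (simp add: field_simps)
  finally show "br w w = 0" by simp
  show "y = k *s w + (t / (2*k)) *s u" unfolding w_def using k by simp
  show "w \<in> L1" unfolding w_def using u1 y1 sub1 by (meson subspace_diff subspace_scale)
qed


lemma caseA: assumes L0s: "L0 = span {a}" and z1: "z \<in> L1" and d1: "d \<in> L1" and znz: "z \<noteq> 0"
  and zc: "\<And>y. br z y = 0" and sp: "span {a,z,d} = UNIV"
  shows "iso_model scale L0 L1 br par12 c_abelian \<or> iso_model scale L0 L1 br par12 (c_one 1 2 3)
       \<or> iso_model scale L0 L1 br par12 (c_one 3 3 1)"
proof -
  have a0: "a \<in> L0" using L0s by (auto intro: span_base)
  have yz: "br y z = 0" if "y \<in> L0 \<or> y \<in> L1" for y using cen_swap[of z y] zc z1 that by simp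
  have az: "br a z = 0" and dz: "br d z = 0" and zz: "br z z = 0" using yz a0 d1 z1 by auto
  have aa: "br a a = 0" using self0 a0 by blast
  obtain \<kappa> \<mu> \<nu> where r: "br a d = \<kappa> *s a + \<mu> *s z + \<nu> *s d" using span3E sp by blast
  have "\<kappa> *s a = br a d - \<mu> *s z - \<nu> *s d" using r by (simp add: algebra_simps)
  also have "\<dots> \<in> L1" using E01[OF a0 d1] z1 d1 sub1 by (meson subspace_diff subspace_scale)
  finally have "\<kappa> *s a \<in> L1" .
  moreover have "\<kappa> *s a \<in> L0" using a0 sub0 subspace_scale by blast
  ultimately have "\<kappa> *s a = 0" using int01 by blast
  hence r2: "br a d = \<mu> *s z + \<nu> *s d" using r by simp
  have nu: "\<nu> = 0"
  proof (rule ccontr)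
    assume nn: "\<nu> \<noteq> 0"
    define v where "v = \<nu> *s d + \<mu> *s z"
    have v1: "v \<in> L1" unfolding v_def using z1 d1 sub1 by (meson subspace_add subspace_scale)
    have "br a v = \<nu> *s v" unfolding v_def by (simp add: az r2 algebra_simps)
    hence "v = 0" using absorb[of a v \<nu>] a0 v1 nn by auto
    hence "0 *s a + \<mu> *s z + \<nu> *s d = 0" unfolding v_def by (simp add: add.commute)
    thus False using lin3[OF sp] nn by blast
  qed
  have ad: "br a d = \<mu> *s z" using r2 nu by simp
  have da: "br d a = - (\<mu> *s z)" using A01[OF a0 d1] ad by simp
  obtain \<kappa>' where dd: "br d d = \<kappa>' *s a" using E11[OF d1 d1] L0s span1E by blast
  have "br d (br d d) = 0" using odd3 d1 by blast
  hence "(\<kappa>' * \<mu>) *s z = 0" using dd da by simp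
  hence km: "\<kappa>' * \<mu> = 0" using znz by simp
  have a1: "a \<in> gpart L0 L1 (par12 1)" and z2: "z \<in> gpart L0 L1 (par12 2)"
    and d3: "d \<in> gpart L0 L1 (par12 3)" and d2: "d \<in> gpart L0 L1 (par12 2)"
    using a0 z1 d1 by (auto simp: gpart_def par12_def)
  consider "\<mu> = 0" "\<kappa>' = 0" | "\<mu> \<noteq> 0" "\<kappa>' = 0" | "\<mu> = 0" "\<kappa>' \<noteq> 0" using km by auto
  thus ?thesis
  proof cases
    case 1
    have "iso_model scale L0 L1 br par12 c_abelian"
      by (rule iso_intro[OF sp a1 z2 d3]) (simp_all add: c_abelian_def aa az ad dz zz dd 1 zc)
    thus ?thesis by simp
  next
    case 2
    have "z = inverse \<mu> *s (\<mu> *s z)" using 2 by simp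
    hence "z \<in> span {a, d, \<mu> *s z}" by (metis insertCI span_base span_scale)
    hence sp2: "span {a, d, \<mu> *s z} = UNIV" using span_UNIV_from[OF _ _ _ sp] by (simp add: span_base)
    have z3: "\<mu> *s z \<in> gpart L0 L1 (par12 3)" using z1 sub1 subspace_scale by (auto simp: gpart_def par12_def)
    have "iso_model scale L0 L1 br par12 (c_one 1 2 3)"
      by (rule iso_intro[OF sp2 a1 d2 z3]) (simp_all add: c_one_def aa az ad dz zz dd 2 zc)
    thus ?thesis by simp
  next
    case 3
    have "a = inverse \<kappa>' *s (\<kappa>' *s a)" using 3 by simp
    hence "a \<in> span {\<kappa>' *s a, z, d}" by (metis insertCI span_base span_scale)
    hence sp3: "span {\<kappa>' *s a, z, d} = UNIV" using span_UNIV_from[OF _ _ _ sp] by (simp add: span_base)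
    have a1': "\<kappa>' *s a \<in> gpart L0 L1 (par12 1)" using a0 sub0 subspace_scale by (auto simp: gpart_def par12_def)
    have "iso_model scale L0 L1 br par12 (c_one 3 3 1)"
      by (rule iso_intro[OF sp3 a1' z2 d3]) (simp_all add: c_one_def aa az ad dz zz dd 3 zc)
    thus ?thesis by simp
  qed
qed


lemma case12: assumes L0s: "L0 = span {a}" and L1s: "L1 = span {b,c}" and sp: "span {a,b,c} = UNIV"
  shows "iso_model scale L0 L1 br par12 c_abelian \<or> iso_model scale L0 L1 br par12 (c_one 2 3 1)
       \<or> iso_model scale L0 L1 br par12 (c_one 1 2 3) \<or> iso_model scale L0 L1 br par12 (c_one 3 3 1)"
proof (cases "\<exists>z. z \<noteq> 0 \<and> z \<in> L1 \<and> (\<forall>y. br z y = 0)")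
  case True
  then obtain z where z: "z \<noteq> 0" "z \<in> L1" "\<And>y. br z y = 0" by blast
  have a0: "a \<in> L0" using L0s by (auto intro: span_base)
  have "z \<in> span {b,c}" using z(2) L1s by simp
  then consider "b \<in> span {z,c}" | "c \<in> span {z,b}" using exch2 z(1) by blast
  hence "\<exists>d. d \<in> L1 \<and> span {a,z,d} = UNIV"
  proof cases
    case 1
    have "a \<in> span {a,z,c}" "b \<in> span {a,z,c}" "c \<in> span {a,z,c}"
      using 1 span_mono[of "{z,c}" "{a,z,c}"] by (auto intro: span_base)
    hence "span {a,z,c} = UNIV" using span_UNIV_from[OF _ _ _ sp] by simp
    moreover have "c \<in> L1" using L1s by (auto intro: span_base)
    ultimately show ?thesis by blast
  next
    case 2
    have "a \<in> span {a,z,b}" "b \<in> span {a,z,b}" "c \<in> span {a,z,b}"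
      using 2 span_mono[of "{z,b}" "{a,z,b}"] by (auto intro: span_base)
    hence "span {a,z,b} = UNIV" using span_UNIV_from[OF _ _ _ sp] by simp
    moreover have "b \<in> L1" using L1s by (auto intro: span_base)
    ultimately show ?thesis by blast
  qed
  then obtain d where "d \<in> L1" "span {a,z,d} = UNIV" by blast
  thus ?thesis using caseA[OF L0s z(2) _ z(1) z(3)] by blast
next
  case False
  have a0: "a \<in> L0" using L0s by (auto intro: span_base)
  have b1: "b \<in> L1" and c1: "c \<in> L1" using L1s by (auto intro: span_base)
  obtain z where z: "z \<noteq> 0" "z \<in> L0 \<or> z \<in> L1" "\<And>y. br z y = 0" using central_exists by metis
  have "z \<in> L0" using z False by blast
  then obtain t where zt: "z = t *s a" using L0s span1E by blast
  have tnz: "t \<noteq> 0" using z(1) zt by auto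
  have acen: "br a y = 0" for y
  proof -
    have "br a y = inverse t *s br z y" using zt tnz by simp
    thus ?thesis using z(3) by simp
  qed
  have ya: "br y a = 0" if "y \<in> L1" for y using A01[OF a0 that] acen by simp
  have aa: "br a a = 0" using acen by simp
  obtain p where bb: "br b b = p *s a" using E11[OF b1 b1] L0s span1E by blast
  obtain q where bc: "br b c = q *s a" using E11[OF b1 c1] L0s span1E by blast
  obtain s where cc: "br c c = s *s a" using E11[OF c1 c1] L0s span1E by blast
  have cb: "br c b = q *s a" using A11[OF b1 c1] bc by simp
  have cen: "br v y = 0" if v1: "v \<in> L1" and vb: "br v b = 0" and vc: "br v c = 0" for v y
  proof -
    obtain \<alpha> \<beta> \<gamma> where "y = \<alpha> *s a + \<beta> *s b + \<gamma> *s c" using span3E sp by blast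
    thus ?thesis using ya[OF v1] vb vc by simp
  qed
  have det: "p * s \<noteq> q * q"
  proof
    assume pq: "p * s = q * q"
    show False
    proof (cases "p = 0")
      case True
      hence "q = 0" using pq by simp
      hence "br b y = 0" for y using cen[OF b1] bb bc True by simp
      moreover have "b \<noteq> 0"
      proof
        assume "b = 0"
        hence "0 *s a + 1 *s b + 0 *s c = 0" by simp
        from lin3[OF sp this] show False by simp
      qed
      ultimately show False using False b1 by blast
    next
      case pn: False
      define v where "v = q *s b - p *s c"
      have v1: "v \<in> L1" unfolding v_def using b1 c1 sub1 by (meson subspace_diff subspace_scale)
      have "br v b = 0" unfolding v_def by (simp add: bb cb mult.commute)
      moreover have "br v c = 0" unfolding v_def by (simp add: bc cc pq mult.commute)
      ultimately have "br v y = 0" for y using cen[OF v1] by blast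
      moreover have "v \<noteq> 0"
      proof
        assume "v = 0"
        hence "0 *s a + q *s b + (- p) *s c = 0" unfolding v_def by simp
        from lin3[OF sp this] pn show False by simp
      qed
      ultimately show False using False v1 by blast
    qed
  qed
  have fin: "iso_model scale L0 L1 br par12 (c_one 2 3 1)"
    if u1: "u \<in> L1" and y1: "y \<in> L1" and uu: "br u u = 0" and uy: "br u y = k *s a"
      and yy: "br y y = t' *s a" and kn: "k \<noteq> 0" and spu: "span {a, u, y} = UNIV" for u y k t'
  proof -
    define w where "w \<equiv> inverse k *s (y - (t' / (2*k)) *s u)"
    note H = hyp[OF u1 y1 uu uy yy kn, folded w_def]
    have "y \<in> span {a,u,w}" using H(3) by (metis insertCI span_add span_base span_scale)
    hence sp2: "span {a,u,w} = UNIV" using span_UNIV_from[OF _ _ _ spu] by (simp add: span_base)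
    have wu: "br w u = a" using A11[OF u1 H(4)] H(1) by simp
    show ?thesis
      by (rule iso_intro[OF sp2]) (simp_all add: gpart_def par12_def c_one_def a0 u1 H acen wu uu)
  qed
  show ?thesis
  proof (cases "p = 0")
    case True
    hence qn: "q \<noteq> 0" using det by auto
    have "iso_model scale L0 L1 br par12 (c_one 2 3 1)"
      by (rule fin[OF b1 c1 _ bc cc qn sp]) (simp add: bb True)
    thus ?thesis by simp
  next
    case pn: False
    have "degree [:s, 2*q, p:] > 0" using pn by simp
    then obtain r where "poly [:s, 2*q, p:] r = 0" using ac unfolding alg_closed_def by blast
    hence root: "s + r * (2 * q + r * p) = 0" by simp
    define u where "u = r *s b + c"
    have u1: "u \<in> L1" unfolding u_def using b1 c1 sub1 by (meson subspace_add subspace_scale)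
    have "br u u = (r*(r*p)) *s a + ((r*q) *s a + ((r*q) *s a + s *s a))"
      unfolding u_def by (simp only: addL addR scL scR bb bc cb cc scale_scale scale_right_distrib add.assoc)
    also have "\<dots> = (r*(r*p) + (r*q + (r*q + s))) *s a" by (simp only: scale_left_distrib)
    also have "r*(r*p) + (r*q + (r*q + s)) = s + r * (2 * q + r * p)" by algebra
    finally have uu: "br u u = 0" using root by simp
    have ub: "br u b = (r * p + q) *s a" unfolding u_def by (simp add: bb cb algebra_simps)
    have kn: "r * p + q \<noteq> 0"
    proof
      assume h: "r * p + q = 0"
      hence q: "q = - (r * p)" by (metis add.commute eq_neg_iff_add_eq_0)
      have "s = r * r * p" using root unfolding q by algebra
      hence "p * s = q * q" unfolding q by algebra
      thus False using det by simp
    qed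
    have "c = u - r *s b" unfolding u_def by simp
    hence "c \<in> span {a,u,b}" by (metis insertCI span_base span_diff span_scale)
    hence spu: "span {a,u,b} = UNIV" using span_UNIV_from[OF _ _ _ sp] by (simp add: span_base)
    have "iso_model scale L0 L1 br par12 (c_one 2 3 1)"
      by (rule fin[OF u1 b1 uu ub bb kn spu])
    thus ?thesis by simp
  qed
qed


lemma classify:
  "iso_model scale L0 L1 br par03 c_abelian
       \<or> iso_model scale L0 L1 br par12 c_abelian
       \<or> iso_model scale L0 L1 br par12 (c_one 2 3 1)
       \<or> iso_model scale L0 L1 br par12 (c_one 1 2 3)
       \<or> iso_model scale L0 L1 br par12 (c_one 3 3 1)
       \<or> iso_model scale L0 L1 br par21 c_abelian
       \<or> iso_model scale L0 L1 br par21 (c_one 3 3 2)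
       \<or> iso_model scale L0 L1 br par30 c_abelian
       \<or> iso_model scale L0 L1 br par30 (c_one 1 2 3)"
proof -
  obtain B0 B1 where B: "finite B0" "finite B1" "B0 \<subseteq> L0" "B1 \<subseteq> L1"
    "span B0 = L0" "span B1 = L1" "span (B0 \<union> B1) = UNIV" "card B0 + card B1 = 3"
    using hom_basis by metis
  have "card B1 = 0 \<or> card B1 = 1 \<or> card B1 = 2 \<or> card B1 = 3" using B(8) by linarith
  moreover
  { assume "card B1 = 0"
    hence e: "B1 = {}" using B(2) by simp
    hence "card B0 = 3" using B(8) by simp
    then obtain x y z where "B0 = {x,y,z}" by (auto simp: card_3_iff)
    hence "iso_model scale L0 L1 br par30 c_abelian \<or> iso_model scale L0 L1 br par30 (c_one 1 2 3)"
      using case30[of x y z] B(6,7) e by simp }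
  moreover
  { assume c1: "card B1 = 1"
    then obtain c where e1: "B1 = {c}" by (auto simp: card_1_singleton_iff)
    have "card B0 = 2" using B(8) c1 by simp
    then obtain a b where e0: "B0 = {a,b}" by (auto simp: card_2_iff)
    have "span {a,b,c} = UNIV" using B(7) e0 e1 by (simp add: insert_commute)
    hence "iso_model scale L0 L1 br par21 c_abelian \<or> iso_model scale L0 L1 br par21 (c_one 3 3 2)"
      using case21[of a b c] B(5,6) e0 e1 by simp }
  moreover
  { assume c1: "card B1 = 2"
    then obtain b c where e1: "B1 = {b,c}" by (auto simp: card_2_iff)
    have "card B0 = 1" using B(8) c1 by simp
    then obtain a where e0: "B0 = {a}" by (auto simp: card_1_singleton_iff)
    have "span {a,b,c} = UNIV" using B(7) e0 e1 by (simp add: insert_commute)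
    hence "iso_model scale L0 L1 br par12 c_abelian \<or> iso_model scale L0 L1 br par12 (c_one 2 3 1)
       \<or> iso_model scale L0 L1 br par12 (c_one 1 2 3) \<or> iso_model scale L0 L1 br par12 (c_one 3 3 1)"
      using case12[of a b c] B(5,6) e0 e1 by simp }
  moreover
  { assume c1: "card B1 = 3"
    hence e0: "B0 = {}" using B(1,8) by simp
    obtain x y z where e1: "B1 = {x,y,z}" using c1 by (auto simp: card_3_iff)
    have "iso_model scale L0 L1 br par03 c_abelian"
      using case03[of x y z] B(4,5,7) e0 e1 by simp }
  ultimately show ?thesis by blast
qed

end

theorem mainTheorem5:
  fixes scale :: "'a::field \<Rightarrow> 'v::ab_group_add \<Rightarrow> 'v"
    and L0 L1 :: "'v set" and br :: "'v \<Rightarrow> 'v \<Rightarrow> 'v"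
  assumes "alg_closed TYPE('a)"
    and "CHAR('a) \<ge> 3"
    and "lie_superalgebra scale L0 L1 br"
    and "nilpotent_lsa scale br"
    and "total_dim scale 3"
  shows "iso_model scale L0 L1 br par03 c_abelian
       \<or> iso_model scale L0 L1 br par12 c_abelian
       \<or> iso_model scale L0 L1 br par12 (c_one 2 3 1)
       \<or> iso_model scale L0 L1 br par12 (c_one 1 2 3)
       \<or> iso_model scale L0 L1 br par12 (c_one 3 3 1)
       \<or> iso_model scale L0 L1 br par21 c_abelian
       \<or> iso_model scale L0 L1 br par21 (c_one 3 3 2)
       \<or> iso_model scale L0 L1 br par30 c_abelian
       \<or> iso_model scale L0 L1 br par30 (c_one 1 2 3)"
proof -
  note L = assms(3)[unfolded lie_superalgebra_def]
  have vs: "vector_space scale" using L by blast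
  obtain B where B: "finite B" "card B = 3" "module.independent scale B" "module.span scale B = UNIV"
    using assms(5) unfolding total_dim_def by blast
  obtain k0 where k0: "lcs scale br k0 = {0}" using assms(4) unfolding nilpotent_lsa_def by blast
  have two: "(2::'a) \<noteq> 0"
  proof
    assume "(2::'a) = 0"
    hence "of_nat 2 = (0::'a)" by simp
    hence "CHAR('a) dvd 2" by (simp only: of_nat_eq_0_iff_char_dvd)
    hence "CHAR('a) \<le> 2" by (simp add: dvd_imp_le)
    thus False using assms(2) by simp
  qed
  interpret fd: finite_dimensional_vector_space scale B
    using vs B by (simp add: finite_dimensional_vector_space_def finite_dimensional_vector_space_axioms_def)
  have s0: "module.subspace scale L0"
    using L by (elim conjE) assumption
  have s1: "module.subspace scale L1"
    using L by (elim conjE) assumption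
  have i01: "L0 \<inter> L1 = {0}"
    using L by (elim conjE) assumption
  have dc: "\<forall>v. \<exists>a\<in>L0. \<exists>b\<in>L1. v = a + b"
    using L by (elim conjE) assumption
  have aL: "\<forall>x y z. br (x + y) z = br x z + br y z"
    using L by (elim conjE) assumption
  have aR: "\<forall>x y z. br x (y + z) = br x y + br x z"
    using L by (elim conjE) assumption
  have sL: "\<forall>c x y. br (scale c x) y = scale c (br x y)"
    using L by (elim conjE) assumption
  have sR: "\<forall>c x y. br x (scale c y) = scale c (br x y)"
    using L by (elim conjE) assumption
  have gr: "\<forall>d e x y. x \<in> gpart L0 L1 d \<longrightarrow> y \<in> gpart L0 L1 e \<longrightarrow>
        br x y \<in> gpart L0 L1 (d \<noteq> e)"
    using L by (elim conjE) assumption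
  have an: "\<forall>d e x y. x \<in> gpart L0 L1 d \<longrightarrow> y \<in> gpart L0 L1 e \<longrightarrow>
        br x y = - scale (ssign d e) (br y x)"
    using L by (elim conjE) assumption
  have od: "\<forall>x\<in>L1. br x (br x x) = 0"
    using L by (elim conjE) assumption
  interpret L3 scale B L0 L1 br k0
    apply unfold_locales
    apply (rule s0)
    apply (rule s1)
    apply (rule i01)
    apply (rule dc)
    apply (rule aL[rule_format])
    apply (rule aR[rule_format])
    apply (rule sL[rule_format])
    apply (rule sR[rule_format])
    apply (rule gr)
    apply (rule an)
    apply (rule od)
    apply (rule k0)
    apply (rule B(2))
    apply (rule two)
    by (rule assms(1))
  show ?thesis by (rule classify)
qed

end
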